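(* The dense $\mathbb{Q}$-game strategy described below is a pairing strategy (i.e. the pairs of edges it uses are pairwise disjoint) and it is a winning strategy for Breaker in the dense rational number game. The dense $\mathbb{Q}$-game strategy: At the start Breaker fixes an infinite sequence $(I_j)_{j\in\mathbb{N}}$ of pairwise disjoint nonempty open intervals of $\mathbb{Q}$, an enumeration $\mathcal{Q}$ of $\mathbb{Q}$, and an enumeration $(\{p_j,q_j\})_{j\in\mathbb{N}}$ of all $2$-element subsets of $\mathbb{Q}$. For every $j$ and every $s\in I_j\setminus\{p_j,q_j\}$ that appears later in $\mathcal{Q}$ than both $p_j$ and $q_j$, Breaker pairs the edges $p_js$ and $q_js$. Whenever Maker claims one edge of such a pair, Breaker claims the other edge of that pair in his next turn (otherwise Breaker plays arbitrarily).
   Context: Let $K^{\mathbb{Q}}$ denote the complete graph with vertex set $\mathbb{Q}$. In the dense rational number game, Maker and Breaker alternately claim previously unclaimed edges of $K^{\mathbb{Q}}$, one per turn, Maker first, for countably many turns. Maker wins if at the end the graph of Maker's edges contains a complete graph on a countably infinite vertex set $V\subseteq\mathbb{Q}$ that is dense in $\mathbb{Q}$; otherwise Breaker wins. A winning strategy for Breaker is one guaranteeing Breaker wins against every play of Maker. *)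

theory Defs
  imports Complex_Main "HOL-Library.Extended_Real"
begin

definition is_edge :: "rat set \<Rightarrow> bool" where
  "is_edge e \<longleftrightarrow> card e = 2"

definition rat_open_interval :: "rat set \<Rightarrow> bool" where
  "rat_open_interval I \<longleftrightarrow> I \<noteq> {} \<and>
     (\<exists>a b :: ereal. I = {x. a < ereal (real_of_rat x) \<and> ereal (real_of_rat x) < b})"

definition dense_in_rat :: "rat set \<Rightarrow> bool" where
  "dense_in_rat V \<longleftrightarrow> (\<forall>a b. a < b \<longrightarrow> (\<exists>v\<in>V. a < v \<and> v < b))"

text \<open>Position in the enumeration Q of s is inv Q s.\<close>
definition dense_Q_pairs ::
  "(nat \<Rightarrow> rat set) \<Rightarrow> (nat \<Rightarrow> rat) \<Rightarrow> (nat \<Rightarrow> rat set) \<Rightarrow> rat set set set" where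
  "dense_Q_pairs I Q pe =
     {{{p, s}, {q, s}} | j p q s. pe j = {p, q} \<and> p \<noteq> q \<and> s \<in> I j \<and> s \<notin> {p, q}
        \<and> inv Q p < inv Q s \<and> inv Q q < inv Q s}"

definition is_pairing :: "rat set set set \<Rightarrow> bool" where
  "is_pairing Ps \<longleftrightarrow> (\<forall>P\<in>Ps. card P = 2 \<and> (\<forall>e\<in>P. is_edge e)) \<and>
     (\<forall>P1\<in>Ps. \<forall>P2\<in>Ps. P1 \<noteq> P2 \<longrightarrow> P1 \<inter> P2 = {})"

text \<open>A legal history: a finite list of pairwise distinct edges (moves so far;
  Maker's moves at even positions, Breaker's at odd positions).\<close>
definition legal_history :: "rat set list \<Rightarrow> bool" where
  "legal_history h \<longleftrightarrow> distinct h \<and> (\<forall>e\<in>set h. is_edge e)"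

definition legal_breaker_strategy :: "(rat set list \<Rightarrow> rat set) \<Rightarrow> bool" where
  "legal_breaker_strategy \<sigma> \<longleftrightarrow>
     (\<forall>h. legal_history h \<and> odd (length h) \<longrightarrow> is_edge (\<sigma> h) \<and> \<sigma> h \<notin> set h)"

definition play_consistent :: "(rat set list \<Rightarrow> rat set) \<Rightarrow> (nat \<Rightarrow> rat set) \<Rightarrow> bool" where
  "play_consistent \<sigma> m \<longleftrightarrow>
     (\<forall>k. is_edge (m (2*k)) \<and> m (2*k) \<notin> m ` {..<2*k}) \<and>
     (\<forall>k. m (2*k+1) = \<sigma> (map m [0..<2*k+1]))"

definition maker_wins_dense :: "(nat \<Rightarrow> rat set) \<Rightarrow> bool" where
  "maker_wins_dense m \<longleftrightarrow>
     (\<exists>V. infinite V \<and> dense_in_rat V \<and>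
        (\<forall>u\<in>V. \<forall>v\<in>V. u \<noteq> v \<longrightarrow> {u, v} \<in> m ` {n. even n}))"

definition breaker_winning :: "(rat set list \<Rightarrow> rat set) \<Rightarrow> bool" where
  "breaker_winning \<sigma> \<longleftrightarrow> legal_breaker_strategy \<sigma> \<and>
     (\<forall>m. play_consistent \<sigma> m \<longrightarrow> \<not> maker_wins_dense m)"

definition follows_pairing :: "rat set set set \<Rightarrow> (rat set list \<Rightarrow> rat set) \<Rightarrow> bool" where
  "follows_pairing Ps \<sigma> \<longleftrightarrow>
     (\<forall>h. legal_history h \<and> odd (length h) \<longrightarrow>
        (\<forall>P\<in>Ps. \<forall>f. last h \<in> P \<and> f \<in> P \<and> f \<noteq> last h \<and> f \<notin> set h \<longrightarrow> \<sigma> h = f))"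

end

theory Submission imports Defs begin

lemma pair_as_image: "{{p, s}, {q, s}} = (\<lambda>x. {x, s}) ` {p, q}" by auto

lemma edge_eq_aux:
  fixes f :: "rat \<Rightarrow> nat"
  assumes "{a, s1} = {b, s2}" "f a < f s1" "f b < f s2"
  shows "s1 = s2"
proof -
  have "(a = b \<and> s1 = s2) \<or> (a = s2 \<and> s1 = b)" using assms(1) by (simp add: doubleton_eq_iff)
  then show ?thesis using assms(2,3) by auto
qed

lemma mem_pairs:
  "P \<in> dense_Q_pairs I Q pe \<longleftrightarrow> (\<exists>j p q s. P = (\<lambda>x. {x, s}) ` pe j \<and> pe j = {p, q} \<and> p \<noteq> q
     \<and> s \<in> I j \<and> s \<notin> {p, q} \<and> inv Q p < inv Q s \<and> inv Q q < inv Q s)"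
proof
  assume "P \<in> dense_Q_pairs I Q pe"
  then obtain j p q s where h: "P = {{p, s}, {q, s}}" "pe j = {p, q}" "p \<noteq> q"
     "s \<in> I j" "s \<notin> {p, q}" "inv Q p < inv Q s" "inv Q q < inv Q s"
    unfolding dense_Q_pairs_def by blast
  have "P = (\<lambda>x. {x, s}) ` pe j" by (simp only: h(1,2) pair_as_image)
  then show "\<exists>j p q s. P = (\<lambda>x. {x, s}) ` pe j \<and> pe j = {p, q} \<and> p \<noteq> q
     \<and> s \<in> I j \<and> s \<notin> {p, q} \<and> inv Q p < inv Q s \<and> inv Q q < inv Q s" using h by blast
next
  assume "\<exists>j p q s. P = (\<lambda>x. {x, s}) ` pe j \<and> pe j = {p, q} \<and> p \<noteq> q
     \<and> s \<in> I j \<and> s \<notin> {p, q} \<and> inv Q p < inv Q s \<and> inv Q q < inv Q s"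
  then obtain j p q s where h: "P = (\<lambda>x. {x, s}) ` pe j" "pe j = {p, q}" "p \<noteq> q"
     "s \<in> I j" "s \<notin> {p, q}" "inv Q p < inv Q s" "inv Q q < inv Q s" by blast
  have "P = {{p, s}, {q, s}}" by (simp only: h(1,2) pair_as_image)
  then show "P \<in> dense_Q_pairs I Q pe" unfolding dense_Q_pairs_def using h by blast
qed

lemma pairing_part:
  assumes disj: "\<And>i j. i \<noteq> j \<Longrightarrow> I i \<inter> I j = {}"
  shows "is_pairing (dense_Q_pairs I Q pe)"
  unfolding is_pairing_def
proof (intro conjI ballI impI)
  fix P assume "P \<in> dense_Q_pairs I Q pe"
  then obtain j p q s where P: "P = {{p, s}, {q, s}}" "p \<noteq> q" "s \<notin> {p, q}"
    unfolding dense_Q_pairs_def by auto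
  then show "card P = 2" by (auto simp: doubleton_eq_iff)
  fix e assume "e \<in> P"
  then show "is_edge e" using P by (auto simp: is_edge_def)
next
  fix P1 P2 assume h1: "P1 \<in> dense_Q_pairs I Q pe" and h2: "P2 \<in> dense_Q_pairs I Q pe"
    and ne: "P1 \<noteq> P2"
  obtain j1 p1 q1 s1 where A: "P1 = (\<lambda>x. {x, s1}) ` pe j1" "pe j1 = {p1, q1}"
     "s1 \<in> I j1" "inv Q p1 < inv Q s1" "inv Q q1 < inv Q s1"
    using h1 unfolding mem_pairs by blast
  obtain j2 p2 q2 s2 where B: "P2 = (\<lambda>x. {x, s2}) ` pe j2" "pe j2 = {p2, q2}"
     "s2 \<in> I j2" "inv Q p2 < inv Q s2" "inv Q q2 < inv Q s2"
    using h2 unfolding mem_pairs by blast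
  show "P1 \<inter> P2 = {}"
  proof (rule ccontr)
    assume "P1 \<inter> P2 \<noteq> {}"
    then obtain e where e: "e \<in> P1" "e \<in> P2" by blast
    obtain a where a: "a \<in> pe j1" "e = {a, s1}" using e(1) A(1) by blast
    obtain b where b: "b \<in> pe j2" "e = {b, s2}" using e(2) B(1) by blast
    have ab: "a \<in> {p1, q1}" "b \<in> {p2, q2}" "{a, s1} = {b, s2}"
      using a b A(2) B(2) by auto
    have "inv Q a < inv Q s1" "inv Q b < inv Q s2" using ab A B by auto
    then have "s1 = s2" using edge_eq_aux[OF ab(3)] by blast
    then have "j1 = j2" using A B disj by blast
    have "P1 = P2" by (simp only: A(1) B(1) \<open>s1 = s2\<close> \<open>j1 = j2\<close>)
    then show False using ne by simp
  qed
qed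

lemma pairing_unique:
  assumes "is_pairing Ps" "P \<in> Ps" "P' \<in> Ps" "x \<in> P" "x \<in> P'" "f \<in> P" "f' \<in> P'"
    "f \<noteq> x" "f' \<noteq> x"
  shows "f = f'"
proof -
  have "P = P'" using assms unfolding is_pairing_def by blast
  moreover have "card P = 2" using assms unfolding is_pairing_def by blast
  ultimately show ?thesis using assms by (auto simp: card_2_iff)
qed

lemma exists_new_edge: "\<exists>e. is_edge e \<and> e \<notin> set (h :: rat set list)"
proof -
  define g where "g = (\<lambda>n::nat. {0::rat, of_nat n + 1})"
  have "inj g" unfolding g_def inj_def
    by (auto simp: doubleton_eq_iff)
  then have "infinite (range g)" by (simp add: range_inj_infinite)
  then have "infinite (range g - set h)" using Diff_infinite_finite[of "set h" "range g"] by simp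
  then have "range g - set h \<noteq> {}" by (rule infinite_imp_nonempty)
  then obtain n where "g n \<notin> set h" by blast
  moreover have "is_edge (g n)" unfolding g_def is_edge_def
  proof -
    have "(0::rat) < of_nat n + 1" by (simp add: add_nonneg_pos)
    then have "(0::rat) \<noteq> of_nat n + 1" by simp
    then show "card {0::rat, of_nat n + 1} = 2" by simp
  qed
  ultimately show ?thesis by blast
qed

lemma strategy_exists:
  assumes "is_pairing Ps"
  shows "\<exists>\<sigma>. legal_breaker_strategy \<sigma> \<and> follows_pairing Ps \<sigma>"
proof -
  define C where "C = (\<lambda>h f. \<exists>P\<in>Ps. last h \<in> P \<and> f \<in> P \<and> f \<noteq> last h \<and> f \<notin> set h)"
  define \<sigma> where "\<sigma> = (\<lambda>h. if \<exists>f. C h f then SOME f. C h f else SOME e. is_edge e \<and> e \<notin> set h)"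
  have "legal_breaker_strategy \<sigma>" unfolding legal_breaker_strategy_def
  proof (intro allI impI)
    fix h assume "legal_history h \<and> odd (length h)"
    show "is_edge (\<sigma> h) \<and> \<sigma> h \<notin> set h"
    proof (cases "\<exists>f. C h f")
      case True
      then have "C h (\<sigma> h)" unfolding \<sigma>_def by (simp add: someI_ex)
      then show ?thesis using assms unfolding C_def is_pairing_def by blast
    next
      case False
      then have "\<sigma> h = (SOME e. is_edge e \<and> e \<notin> set h)" unfolding \<sigma>_def by auto
      then show ?thesis using someI_ex[OF exists_new_edge[of h]] by simp
    qed
  qed
  moreover have "follows_pairing Ps \<sigma>" unfolding follows_pairing_def
  proof (intro allI impI ballI)
    fix h P f assume "legal_history h \<and> odd (length h)" "P \<in> Ps"
      "last h \<in> P \<and> f \<in> P \<and> f \<noteq> last h \<and> f \<notin> set h"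
    then have Cf: "C h f" unfolding C_def by blast
    then have "C h (\<sigma> h)" unfolding \<sigma>_def by (auto intro: someI)
    then obtain P' where "P' \<in> Ps" "last h \<in> P'" "\<sigma> h \<in> P'" "\<sigma> h \<noteq> last h" unfolding C_def by blast
    then show "\<sigma> h = f" using pairing_unique[OF assms] \<open>P \<in> Ps\<close> Cf unfolding C_def
      by (metis \<open>last h \<in> P \<and> f \<in> P \<and> f \<noteq> last h \<and> f \<notin> set h\<close>)
  qed
  ultimately show ?thesis by blast
qed


lemma prefix_legal:
  assumes L: "legal_breaker_strategy \<sigma>" and P: "play_consistent \<sigma> m"
  shows "legal_history (map m [0..<n])"
proof (induction n)
  case 0 then show ?case by (simp add: legal_history_def)
next
  case (Suc n)
  show ?case
  proof (cases "even n")
    case True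
    then obtain k where k: "n = 2*k" by blast
    have "is_edge (m n)" "m n \<notin> m ` {..<n}" using P k unfolding play_consistent_def by auto
    moreover have "set (map m [0..<n]) = m ` {..<n}" by auto
    ultimately show ?thesis using Suc unfolding legal_history_def by auto
  next
    case False
    then obtain k where k: "n = 2*k+1" by (metis oddE)
    have "m n = \<sigma> (map m [0..<n])" using P k unfolding play_consistent_def by auto
    moreover have "legal_history (map m [0..<n]) \<and> odd (length (map m [0..<n]))" using Suc False by simp
    then have "is_edge (\<sigma> (map m [0..<n])) \<and> \<sigma> (map m [0..<n]) \<notin> set (map m [0..<n])"
      using L unfolding legal_breaker_strategy_def by blast
    ultimately show ?thesis using Suc unfolding legal_history_def by auto
  qed
qed

lemma play_inj:
  assumes L: "legal_breaker_strategy \<sigma>" and P: "play_consistent \<sigma> m"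
    and "m i = m j"
  shows "i = j"
proof -
  have "distinct (map m [0..<Suc (max i j)])" using prefix_legal[OF L P] legal_history_def by blast
  then have "inj_on m (set [0..<Suc (max i j)])" using distinct_map by blast
  then have "inj_on m {0..<Suc (max i j)}" by (simp only: set_upt)
  then show ?thesis using assms(3) by (auto simp: inj_on_def)
qed

lemma pair_conflict_ord:
  assumes L: "legal_breaker_strategy \<sigma>" and F: "follows_pairing Ps \<sigma>" and P: "play_consistent \<sigma> m"
    and "Pr \<in> Ps" "m n1 \<in> Pr" "m n2 \<in> Pr" "m n1 \<noteq> m n2" "even n1" "even n2" "n1 < n2"
  shows False
proof -
  obtain k where k: "n1 = 2*k" using assms by blast
  define h where "h = map m [0..<2*k+1]"
  have "legal_history h" unfolding h_def by (rule prefix_legal[OF L P])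
  then have lh: "legal_history h \<and> odd (length h)" using h_def by simp
  have last: "last h = m n1" using k h_def by simp
  have notin: "m n2 \<notin> set h"
  proof
    assume "m n2 \<in> set h"
    then obtain i where "i < 2*k+1" "m i = m n2" unfolding h_def set_map set_upt by auto
    then have "i = n2" "i < 2*k+1" using play_inj[OF L P] by blast+
    then show False using assms k by linarith
  qed
  have "\<sigma> h = m n2" using F lh assms last notin unfolding follows_pairing_def by metis
  moreover have "m (2*k+1) = \<sigma> h" using P h_def unfolding play_consistent_def by simp
  ultimately have "2*k+1 = n2" using play_inj[OF L P] by metis
  then show False using assms(9) by auto
qed

lemma pair_conflict:
  assumes L: "legal_breaker_strategy \<sigma>" and F: "follows_pairing Ps \<sigma>" and P: "play_consistent \<sigma> m"
    and "Pr \<in> Ps" "e1 \<in> Pr" "e2 \<in> Pr" "e1 \<noteq> e2" "e1 \<in> m ` {n. even n}" "e2 \<in> m ` {n. even n}"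
  shows False
proof -
  obtain n1 n2 where n: "e1 = m n1" "e2 = m n2" "even n1" "even n2" using assms by blast
  then have "n1 \<noteq> n2" using assms by auto
  then show False
    using pair_conflict_ord[OF L F P, of Pr n1 n2] pair_conflict_ord[OF L F P, of Pr n2 n1] n assms
    by (metis linorder_neqE_nat)
qed

lemma below_rat:
  assumes "a < ereal (real_of_rat x)"
  shows "\<exists>c::rat. c < x \<and> a < ereal (real_of_rat c)"
proof -
  obtain z where z: "a < ereal z" "ereal z < ereal (real_of_rat x)" using ereal_dense2[OF assms] by blast
  then have "z < real_of_rat x" by simp
  then obtain r where "r \<in> \<rat>" "z < r" "r < real_of_rat x" using Rats_dense_in_real by blast
  then obtain c where "r = real_of_rat c" by (auto elim: Rats_cases)
  then show ?thesis using z \<open>z < r\<close> \<open>r < real_of_rat x\<close>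
    by (metis ereal_less_eq(3) less_le_trans of_rat_less order_less_imp_le)
qed

lemma above_rat:
  assumes "ereal (real_of_rat x) < b"
  shows "\<exists>d::rat. x < d \<and> ereal (real_of_rat d) < b"
proof -
  obtain z where z: "ereal z < b" "ereal (real_of_rat x) < ereal z" using ereal_dense2[OF assms] by blast
  then have "real_of_rat x < z" by simp
  then obtain r where "r \<in> \<rat>" "real_of_rat x < r" "r < z" using Rats_dense_in_real by blast
  then obtain d where "r = real_of_rat d" by (auto elim: Rats_cases)
  then show ?thesis using z \<open>real_of_rat x < r\<close> \<open>r < z\<close>
    by (metis ereal_less_eq(3) le_less_trans of_rat_less order_less_imp_le)
qed

lemma interval_contains:
  assumes "rat_open_interval J"
  shows "\<exists>c d. c < d \<and> {c<..<d} \<subseteq> J"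
proof -
  obtain a b where ab: "J = {x. a < ereal (real_of_rat x) \<and> ereal (real_of_rat x) < b}" "J \<noteq> {}"
    using assms unfolding rat_open_interval_def by blast
  then obtain x where "x \<in> J" by blast
  then have x: "a < ereal (real_of_rat x)" "ereal (real_of_rat x) < b" using ab by auto
  obtain c where c: "c < x" "a < ereal (real_of_rat c)" using below_rat[OF x(1)] by blast
  obtain d where d: "x < d" "ereal (real_of_rat d) < b" using above_rat[OF x(2)] by blast
  have "{c<..<d} \<subseteq> J"
  proof
    fix y assume "y \<in> {c<..<d}"
    then have "c < y" "y < d" by auto
    then have "ereal (real_of_rat c) < ereal (real_of_rat y)" "ereal (real_of_rat y) < ereal (real_of_rat d)"
      by (simp_all add: of_rat_less)
    then have "a < ereal (real_of_rat y)" "ereal (real_of_rat y) < b"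
      using c(2) d(2) by (meson less_trans)+
    then show "y \<in> J" using ab by blast
  qed
  then show ?thesis using c d by (meson less_trans)
qed

lemma dense_infinite:
  assumes D: "dense_in_rat V" and "c < d"
  shows "infinite (V \<inter> {c<..<d})"
proof
  assume fin: "finite (V \<inter> {c<..<d})"
  obtain v where "v \<in> V" "c < v" "v < d" using D assms(2) unfolding dense_in_rat_def by blast
  then have ne: "V \<inter> {c<..<d} \<noteq> {}" by auto
  define u where "u = Min (V \<inter> {c<..<d})"
  have u: "u \<in> V \<inter> {c<..<d}" using Min_in[OF fin ne] u_def by simp
  then obtain w where "w \<in> V" "c < w" "w < u" using D unfolding dense_in_rat_def by auto
  then have "w \<in> V \<inter> {c<..<d}" using u by auto
  then have "u \<le> w" using Min_le[OF fin] u_def by simp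
  then show False using \<open>w < u\<close> by simp
qed


theorem lemma4p1:
  fixes I :: "nat \<Rightarrow> rat set" and Q :: "nat \<Rightarrow> rat" and pe :: "nat \<Rightarrow> rat set"
  assumes "\<And>j. rat_open_interval (I j)"
    and "\<And>i j. i \<noteq> j \<Longrightarrow> I i \<inter> I j = {}"
    and "bij Q"
    and "bij_betw pe UNIV {A :: rat set. card A = 2}"
  shows "is_pairing (dense_Q_pairs I Q pe)
    \<and> (\<exists>\<sigma>. legal_breaker_strategy \<sigma> \<and> follows_pairing (dense_Q_pairs I Q pe) \<sigma>)
    \<and> (\<forall>\<sigma>. legal_breaker_strategy \<sigma> \<and> follows_pairing (dense_Q_pairs I Q pe) \<sigma>
           \<longrightarrow> breaker_winning \<sigma>)"
proof -
  let ?Ps = "dense_Q_pairs I Q pe"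
  have pair: "is_pairing ?Ps" using pairing_part assms(2) by blast
  have win: "breaker_winning \<sigma>" if L: "legal_breaker_strategy \<sigma>" and F: "follows_pairing ?Ps \<sigma>" for \<sigma>
    unfolding breaker_winning_def
  proof (intro conjI allI impI L)
    fix m assume P: "play_consistent \<sigma> m"
    show "\<not> maker_wins_dense m"
    proof
      assume "maker_wins_dense m"
      then obtain V where V: "infinite V" "dense_in_rat V"
        "\<And>u v. u \<in> V \<Longrightarrow> v \<in> V \<Longrightarrow> u \<noteq> v \<Longrightarrow> {u, v} \<in> m ` {n. even n}"
        unfolding maker_wins_dense_def by blast
      obtain p where p: "p \<in> V" using V(1) by (metis finite.emptyI ex_in_conv)
      have "infinite (V - {p})" using V(1) by simp
      then obtain q where q: "q \<in> V" "q \<noteq> p" by (metis finite.emptyI ex_in_conv Diff_iff singletonI)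
      have "card {p, q} = 2" using q by simp
      then have "{p, q} \<in> range pe" using assms(4) unfolding bij_betw_def by simp
      then obtain j where j: "pe j = {p, q}" by (metis rangeE)
      obtain c d where cd: "c < d" "{c<..<d} \<subseteq> I j" using interval_contains[OF assms(1)] by blast
      have inf: "infinite (V \<inter> {c<..<d})" using dense_infinite[OF V(2) cd(1)] .
      define N where "N = max (inv Q p) (inv Q q)"
      have "finite ({p, q} \<union> Q ` {..N})" by simp
      then have "V \<inter> {c<..<d} - ({p, q} \<union> Q ` {..N}) \<noteq> {}"
        using inf by (metis Diff_infinite_finite finite.emptyI)
      then obtain s where s: "s \<in> V" "s \<in> I j" "s \<notin> {p, q}" "s \<notin> Q ` {..N}" using cd by blast
      have "Q (inv Q s) = s" using assms(3) by (simp add: bij_is_surj surj_f_inv_f)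
      then have "\<not> inv Q s \<le> N" using s(4) by (metis atMost_iff image_eqI)
      then have lt: "inv Q p < inv Q s" "inv Q q < inv Q s" unfolding N_def by auto
      have mem: "{{p, s}, {q, s}} \<in> ?Ps" unfolding dense_Q_pairs_def
        using j q s lt by blast
      have e1: "{p, s} \<in> m ` {n. even n}" using V(3) p s by auto
      have e2: "{q, s} \<in> m ` {n. even n}" using V(3) q s by auto
      have "{p, s} \<noteq> {q, s}" using q s by (auto simp: doubleton_eq_iff)
      then show False using pair_conflict[OF L F P mem _ _ _ e1 e2] by simp
    qed
  qed
  show ?thesis
  proof (intro conjI allI impI)
    show "is_pairing ?Ps" by (rule pair)
    show "\<exists>\<sigma>. legal_breaker_strategy \<sigma> \<and> follows_pairing ?Ps \<sigma>" by (rule strategy_exists[OF pair])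
    fix \<sigma> assume "legal_breaker_strategy \<sigma> \<and> follows_pairing ?Ps \<sigma>"
    then show "breaker_winning \<sigma>" using win by blast
  qed
qed

end
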